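(* Let $k\ge 3$ be an integer and let $\varepsilon\in(0,1)$ satisfy $1/\varepsilon > k$. Then \[ d(k,\varepsilon) \ \le\ \frac{1}{2}\left(\frac{\log\big(r_k(\lfloor 1/\varepsilon+1\rfloor)+1\big)}{\log\big(\lfloor 1/\varepsilon+1\rfloor\big)}+1\right). \]
   Context: A $k$-term arithmetic progression ($k$AP) is a set $P=\{x, x+\lambda, \dots, x+(k-1)\lambda\}\subset\mathbb{R}$ with $\lambda>0$, called the gap length of $P$. For $N\in\mathbb{N}$, $r_k(N)$ denotes the maximal cardinality of a subset $A\subseteq\{1,\dots,N\}$ that contains no $k$AP. Given $\varepsilon\in(0,1)$, a set $E\subset\mathbb{R}$ is said to $\varepsilon$-avoid $k$APs if for every $k$AP $P$ with gap length $\lambda$ one has $\sup_{p\in P}\inf_{x\in E}|x-p|\ \ge\ \varepsilon\lambda$. Define $d(k,\varepsilon)=\sup\{\dim_H(E): E\subset\mathbb{R} \text{ bounded and } E \ \varepsilon\text{-avoids } k\text{APs}\}$, where $\dim_H$ is Hausdorff dimension. *)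

theory Defs
  imports "HOL-Analysis.Analysis"
begin

definition kAP :: "nat \<Rightarrow> real \<Rightarrow> real \<Rightarrow> real set" where
  "kAP k x lam = {x + real i * lam | i. i < k}"

definition contains_kAP :: "nat \<Rightarrow> nat set \<Rightarrow> bool" where
  "contains_kAP k A \<longleftrightarrow> (\<exists>x lam. lam > 0 \<and> kAP k x lam \<subseteq> real ` A)"

definition r_AP :: "nat \<Rightarrow> nat \<Rightarrow> nat" where
  "r_AP k N = Max {card A | A. A \<subseteq> {1..N} \<and> \<not> contains_kAP k A}"

(* E eps-avoids kAPs: for every kAP P with gap lam,
   sup_{p in P} inf_{x in E} |x - p| >= eps * lam.
   Since P is finite, this says some p in P has inf_{x in E} |x-p| >= eps*lam,
   i.e. |x - p| >= eps*lam for all x in E. *)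
definition eps_avoids :: "nat \<Rightarrow> real \<Rightarrow> real set \<Rightarrow> bool" where
  "eps_avoids k eps E \<longleftrightarrow>
     (\<forall>x lam. lam > 0 \<longrightarrow> (\<exists>p\<in>kAP k x lam. \<forall>y\<in>E. eps * lam \<le> \<bar>y - p\<bar>))"

definition hausdorff_content :: "real \<Rightarrow> real \<Rightarrow> real set \<Rightarrow> ennreal" where
  "hausdorff_content s delta E =
     (INF U \<in> {U :: nat \<Rightarrow> real set. E \<subseteq> (\<Union>i. U i) \<and>
                 (\<forall>i. bounded (U i) \<and> diameter (U i) \<le> delta)}.
        (\<Sum>i. ennreal (diameter (U i) powr s)))"

definition hausdorff_measure :: "real \<Rightarrow> real set \<Rightarrow> ennreal" where
  "hausdorff_measure s E = (SUP delta \<in> {0<..}. hausdorff_content s delta E)"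

(* Hausdorff dimension: inf { s > 0 : H^s(E) = 0 } (equals inf over s >= 0, since
   H^s(E) = 0 for all s > 1 and the s = 0 case only matters for E empty) *)
definition hausdorff_dim :: "real set \<Rightarrow> real" where
  "hausdorff_dim E = Inf {s. s > 0 \<and> hausdorff_measure s E = 0}"

definition d_AP :: "nat \<Rightarrow> real \<Rightarrow> real" where
  "d_AP k eps = Sup {hausdorff_dim E | E. bounded E \<and> eps_avoids k eps E}"

end

theory Submission
  imports Defs
begin


definition piece :: "real \<Rightarrow> real \<Rightarrow> nat \<Rightarrow> real set" where
  "piece a h t = {a + real t * h .. a + (real t + 1) * h}"

lemma Q_free:
  assumes k2: "k \<ge> 2" and eav: "eps_avoids k eps E" and epsN: "eps * real N > 1" and h: "h > 0"
  shows "\<not> contains_kAP k (Suc ` {q. q < N \<and> piece a h (q*N+m) \<inter> E \<noteq> {}})"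
    (is "\<not> contains_kAP k (Suc ` ?Q)")
proof
  assume "contains_kAP k (Suc ` ?Q)"
  then obtain x lam where lam: "lam > 0" and sub: "kAP k x lam \<subseteq> real ` Suc ` ?Q"
    unfolding contains_kAP_def by blast
  have mem: "\<exists>q\<in>?Q. x + real i * lam = real (Suc q)" if "i < k" for i
  proof -
    have "x + real i * lam \<in> kAP k x lam" using that unfolding kAP_def by blast
    then show ?thesis using sub by blast
  qed
  obtain q0 where q0: "q0 \<in> ?Q" "x + real 0 * lam = real (Suc q0)" using mem[of 0] k2 by auto
  obtain q1 where q1: "q1 \<in> ?Q" "x + real 1 * lam = real (Suc q1)" using mem[of 1] k2 by auto
  have "real q1 > real q0" using q0 q1 lam by simp
  hence "q1 \<ge> Suc q0" by simp
  hence lam1: "lam \<ge> 1" using q0 q1 by (simp add: of_nat_diff) 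
  define x' where "x' = a + ((x - 1) * real N + real m + 1/2) * h"
  define lam' where "lam' = lam * real N * h"
  have N0: "real N > 0" using epsN by (cases "N = 0") auto
  have "lam' > 0" unfolding lam'_def using lam N0 h by simp
  then obtain p where p: "p \<in> kAP k x' lam'" and pE: "\<forall>y\<in>E. eps * lam' \<le> \<bar>y - p\<bar>"
    using eav unfolding eps_avoids_def by blast
  obtain i where i: "i < k" "p = x' + real i * lam'" using p unfolding kAP_def by blast
  obtain qi where qi: "qi \<in> ?Q" "x + real i * lam = real (Suc qi)" using mem[OF i(1)] by blast
  have pq: "p = a + (real qi * real N + real m + 1/2) * h"
  proof -
    have "p = a + ((x + real i * lam - 1) * real N + real m + 1/2) * h"
      unfolding i(2) x'_def lam'_def by (simp add: algebra_simps)
    also have "\<dots> = a + (real qi * real N + real m + 1/2) * h" using qi(2) by simp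
    finally show ?thesis .
  qed
  obtain y where y: "y \<in> E" "y \<in> piece a h (qi*N+m)" using qi(1) by blast
  have "\<bar>y - p\<bar> \<le> h/2" using y(2) unfolding piece_def pq by (auto simp: algebra_simps abs_if)
  moreover have "eps * lam' \<le> \<bar>y - p\<bar>" using pE y by blast
  moreover have "eps * lam' > h"
  proof -
    have e1: "eps * lam' = (eps * real N * h) * lam" unfolding lam'_def by simp
    have e2: "(eps * real N * h) * 1 \<le> (eps * real N * h) * lam" using lam1 h epsN by (intro mult_left_mono) auto
    have e3: "(eps * real N) * h > 1 * h" using epsN h by (intro mult_strict_right_mono) auto
    show ?thesis using e1 e2 e3 by linarith
  qed
  ultimately show False using h by linarith
qed

lemma key_count:
  assumes k2: "k \<ge> 2" and eav: "eps_avoids k eps E" and epsN: "eps * real N > 1" and h: "h > 0"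
    and rb: "\<And>A. A \<subseteq> {1..N} \<Longrightarrow> \<not> contains_kAP k A \<Longrightarrow> card A \<le> r"
  shows "card {t. t < N^2 \<and> piece a h t \<inter> E \<noteq> {}} \<le> N * r"
proof -
  let ?Q = "\<lambda>m. {q. q < N \<and> piece a h (q*N+m) \<inter> E \<noteq> {}}"
  have N0: "N > 0" using epsN by (cases "N = 0") auto
  have cQ: "card (?Q m) \<le> r" for m
  proof -
    have "card (Suc ` ?Q m) \<le> r"
      by (rule rb) (use Q_free[OF k2 eav epsN h] in auto)
    moreover have "card (Suc ` ?Q m) = card (?Q m)" by (simp add: card_image)
    ultimately show ?thesis by simp
  qed
  have sub: "{t. t < N^2 \<and> piece a h t \<inter> E \<noteq> {}} \<subseteq> (\<Union>m\<in>{..<N}. (\<lambda>q. q*N+m) ` ?Q m)"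
  proof
    fix t assume t: "t \<in> {t. t < N^2 \<and> piece a h t \<inter> E \<noteq> {}}"
    have td: "t = (t div N) * N + t mod N" by simp
    have "t div N < N" using t N0 by (simp add: less_mult_imp_div_less power2_eq_square)
    moreover have "t mod N < N" using N0 by simp
    ultimately show "t \<in> (\<Union>m\<in>{..<N}. (\<lambda>q. q*N+m) ` ?Q m)"
      using t td by (intro UN_I[of "t mod N"]) (auto intro!: image_eqI[of t _ "t div N"])
  qed
  have "card {t. t < N^2 \<and> piece a h t \<inter> E \<noteq> {}} \<le> card (\<Union>m\<in>{..<N}. (\<lambda>q. q*N+m) ` ?Q m)"
    by (rule card_mono[OF _ sub]) auto
  also have "\<dots> \<le> (\<Sum>m\<in>{..<N}. card ((\<lambda>q. q*N+m) ` ?Q m))" by (rule card_UN_le) auto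
  also have "\<dots> \<le> (\<Sum>m\<in>{..<N}. r)"
    proof (rule sum_mono)
    fix m assume "m \<in> {..<N}"
    have "finite (?Q m)" by simp
    hence "card ((\<lambda>q. q*N+m) ` ?Q m) \<le> card (?Q m)" by (rule card_image_le)
    thus "card ((\<lambda>q. q*N+m) ` ?Q m) \<le> r" using cQ[of m] by linarith
  qed
  also have "\<dots> = N * r" by simp
  finally show ?thesis .
qed

lemma level_count:
  assumes k2: "k \<ge> 2" and eav: "eps_avoids k eps E" and epsN: "eps * real N > 1" and L: "L > 0"
    and rb: "\<And>A. A \<subseteq> {1..N} \<Longrightarrow> \<not> contains_kAP k A \<Longrightarrow> card A \<le> r"
  shows "card {j. j < (N^2)^n \<and> piece a0 (L / real (N^2) ^ n) j \<inter> E \<noteq> {}} \<le> (N * r)^n"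
proof (induction n)
  case 0
  have "{j. j < (N^2)^0 \<and> piece a0 (L / real (N^2) ^ 0) j \<inter> E \<noteq> {}} \<subseteq> {0}" by auto
  hence "card {j. j < (N^2)^0 \<and> piece a0 (L / real (N^2) ^ 0) j \<inter> E \<noteq> {}} \<le> card {0::nat}"
    by (rule card_mono[rotated]) auto
  thus ?case by simp
next
  case (Suc n)
  define M where "M = N^2"
  have N0: "N > 0" using epsN by (cases "N = 0") auto
  hence M0: "M > 0" unfolding M_def by simp
  define hn where "hn = L / real M ^ n"
  define hn1 where "hn1 = L / real M ^ Suc n"
  have hM: "hn1 * real M = hn" unfolding hn_def hn1_def using M0 by (simp add: field_simps)
  have hn1: "hn1 > 0" unfolding hn1_def using L M0 by simp
  let ?S = "\<lambda>n. {j. j < M^n \<and> piece a0 (L / real M ^ n) j \<inter> E \<noteq> {}}"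
  let ?T = "\<lambda>j. {t. t < M \<and> piece (a0 + real j * hn) hn1 t \<inter> E \<noteq> {}}"
  have sub: "?S (Suc n) \<subseteq> (\<lambda>(j,t). j*M+t) ` (SIGMA j:?S n. ?T j)"
  proof
    fix j' assume j': "j' \<in> ?S (Suc n)"
    define j where "j = j' div M"
    define t where "t = j' mod M"
    have jt: "j' = j*M + t" unfolding j_def t_def by simp
    have tM: "t < M" unfolding t_def using M0 by simp
    have jlt: "j < M^n" unfolding j_def using j' M0 by (simp add: less_mult_imp_div_less mult.commute)
    have rj: "real j' = real j * real M + real t" using jt by simp
    have peq: "piece a0 hn1 j' = piece (a0 + real j * hn) hn1 t"
      unfolding piece_def rj hM[symmetric] by (simp add: algebra_simps)
    have psub: "piece a0 hn1 j' \<subseteq> piece a0 hn j"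
    proof -
      have "real t + 1 \<le> real M" using tM by simp
      hence "(real t + 1) * hn1 \<le> real M * hn1" using hn1 by (intro mult_right_mono) auto
      hence "a0 + real j * hn + (real t + 1) * hn1 \<le> a0 + (real j + 1) * hn"
        using hM by (simp add: algebra_simps)
      moreover have "a0 + real j * hn \<le> a0 + real j * hn + real t * hn1" using hn1 by simp
      ultimately show ?thesis unfolding peq unfolding piece_def by (auto simp: algebra_simps)
    qed
    have ne: "piece a0 hn1 j' \<inter> E \<noteq> {}" using j' unfolding hn1_def by simp
    have "j \<in> ?S n" using jlt ne psub unfolding hn_def by auto
    moreover have "t \<in> ?T j" using tM ne peq by simp
    ultimately show "j' \<in> (\<lambda>(j,t). j*M+t) ` (SIGMA j:?S n. ?T j)" using jt by force
  qed
  have "card (?S (Suc n)) \<le> card (SIGMA j:?S n. ?T j)"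
    by (rule order_trans[OF card_mono[OF _ sub] card_image_le]) auto
  also have "\<dots> = (\<Sum>j\<in>?S n. card (?T j))" by simp
  also have "\<dots> \<le> (\<Sum>j\<in>?S n. N * r)"
  proof (rule sum_mono)
    fix j show "card (?T j) \<le> N * r"
      using key_count[OF k2 eav epsN hn1 rb, of "a0 + real j * hn"] unfolding M_def by simp
  qed
  also have "\<dots> = card (?S n) * (N * r)" by simp
  also have "\<dots> \<le> (N*r)^n * (N * r)" using Suc.IH unfolding M_def by (intro mult_right_mono) auto
  finally show ?case unfolding M_def by (simp add: mult.commute)
qed



lemma cover_pieces:
  assumes y: "y \<in> {a0..a0+L}" and L: "L > 0" and K: "K > (0::nat)"
  shows "\<exists>j<K. y \<in> piece a0 (L / real K) j"
proof -
  define h where "h = L / real K"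
  have h: "h > 0" unfolding h_def using L K by simp
  define u where "u = (y - a0) / h"
  have u0: "u \<ge> 0" unfolding u_def using y h by simp
  have uK: "u \<le> real K"
  proof -
    have "y - a0 \<le> L" using y by simp
    hence "(y - a0) / h \<le> L / h" using h by (simp add: divide_right_mono)
    also have "L / h = real K" unfolding h_def using L K by simp
    finally show ?thesis unfolding u_def .
  qed
  have yu: "y = a0 + u * h" unfolding u_def using h by simp
  show ?thesis
  proof (cases "u < real K")
    case True
    define j where "j = nat \<lfloor>u\<rfloor>"
    have j1: "real j \<le> u" unfolding j_def using u0 by linarith
    have j2: "u \<le> real j + 1" unfolding j_def using u0 by linarith
    have "j < K" using j1 True by linarith
    moreover have "y \<in> piece a0 h j" unfolding piece_def yu using j1 j2 h
      by (auto intro!: mult_right_mono)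
    ultimately show ?thesis unfolding h_def by blast
  next
    case False
    hence u: "u = real K" using uK by simp
    have "K - 1 < K" using K by simp
    moreover have "real (K - 1) = real K - 1" using K by (simp add: of_nat_diff)
    hence "y \<in> piece a0 h (K - 1)" unfolding piece_def yu u using h K
      by (auto intro!: mult_right_mono)
    ultimately show ?thesis unfolding h_def by blast
  qed
qed

lemma content_zero:
  fixes E :: "real set" and M c :: nat
  assumes EL: "E \<subseteq> {a0..a0+L}" and L: "L > 0" and M: "M > 1" and c: "c \<ge> 1"
    and cnt: "\<And>n. card {j. j < M^n \<and> piece a0 (L / real M ^ n) j \<inter> E \<noteq> {}} \<le> c^n"
    and s: "s > ln c / ln M" and d: "delta > 0"
  shows "hausdorff_content s delta E = 0"
proof -
  define q where "q = real c / (real M powr s)"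
  have Mp: "real M powr s > 0" using M by simp
  have q0: "q \<ge> 0" unfolding q_def using Mp by simp
  have "real M powr (ln c / ln M) = real c"
    using M c by (simp add: powr_def)
  moreover have "real M powr (ln c / ln M) < real M powr s" using M s by (intro powr_less_mono) auto
  ultimately have q1: "q < 1" unfolding q_def using Mp by simp
  have hp: "(L / real M ^ n) powr s = L powr s / (real M powr s)^n" for n
  proof -
    have "(real M ^ n) powr s = (real M powr real n) powr s" using M by (simp add: powr_realpow)
    also have "\<dots> = real M powr (real n * s)" by (simp add: powr_powr)
    also have "\<dots> = (real M powr s)^n" using M by (simp add: powr_power)
    finally show ?thesis by (simp add: powr_divide)
  qed
  have bound: "hausdorff_content s delta E \<le> ennreal (L powr s * q^n)" if hd: "L / real M ^ n \<le> delta" for n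
  proof -
    define h where "h = L / real M ^ n"
    have h0: "h > 0" unfolding h_def using L M by simp
    define Sn where "Sn = {j. j < M^n \<and> piece a0 h j \<inter> E \<noteq> {}}"
    have finS: "finite Sn" unfolding Sn_def by simp
    define U where "U = (\<lambda>i. if i \<in> Sn then piece a0 h i else {})"
    have cov: "E \<subseteq> (\<Union>i. U i)"
    proof
      fix y assume yE: "y \<in> E"
      have "M^n > 0" using M by simp
      then obtain j where j: "j < M^n" "y \<in> piece a0 (L / real (M^n)) j"
        using cover_pieces[of y a0 L "M^n"] yE EL L by blast
      hence "j \<in> Sn" "y \<in> piece a0 h j" unfolding Sn_def h_def using yE by auto
      thus "y \<in> (\<Union>i. U i)" unfolding U_def by (intro UN_I[of j]) auto
    qed
    have diam: "bounded (U i) \<and> diameter (U i) \<le> delta" for i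
    proof -
      have hd': "h \<le> delta" using hd unfolding h_def .
      have "diameter (piece a0 h i) = h" unfolding piece_def using h0 by (simp add: algebra_simps)
      thus ?thesis unfolding U_def using hd' d by (auto simp: piece_def)
    qed
    have "hausdorff_content s delta E \<le> (\<Sum>i. ennreal (diameter (U i) powr s))"
      unfolding hausdorff_content_def using cov diam by (intro INF_lower) auto
    also have "(\<Sum>i. ennreal (diameter (U i) powr s)) = (\<Sum>i\<in>Sn. ennreal (diameter (U i) powr s))"
      by (rule suminf_finite[OF finS]) (simp add: U_def)
    also have "\<dots> = (\<Sum>i\<in>Sn. ennreal (h powr s))"
      by (rule sum.cong) (use h0 in \<open>auto simp: U_def piece_def algebra_simps\<close>)
    also have "\<dots> = ennreal (real (card Sn) * h powr s)" by (simp add: ennreal_mult ennreal_of_nat_eq_real_of_nat)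
    also have "\<dots> \<le> ennreal (real (c^n) * h powr s)"
      using cnt[of n] unfolding Sn_def h_def by (intro ennreal_leI mult_right_mono) auto
    also have "real (c^n) * h powr s = L powr s * q^n"
      unfolding h_def hp q_def by (simp add: power_divide)
    finally show ?thesis .
  qed
  have "hausdorff_content s delta E \<le> 0"
  proof (rule ennreal_le_epsilon)
    fix e :: real assume e: "0 < e"
    have Lp: "L powr s > 0" using L by simp
    obtain n1 where n1: "(1 / real M)^n1 < delta / L" using real_arch_pow_inv[of "delta / L" "1 / real M"] d L M by auto
    obtain n2 where n2: "q^n2 < e / L powr s"
    proof (cases "q = 0")
      case True thus ?thesis using that[of 1] e Lp by simp
    next
      case False thus ?thesis using real_arch_pow_inv[of "e / L powr s" q] that e Lp q1 by auto
    qed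
    define n where "n = n1 + n2"
    have "(1 / real M)^n \<le> (1 / real M)^n1" unfolding n_def using M by (intro power_decreasing) auto
    hence "L * (1 / real M)^n \<le> L * (1 / real M)^n1" using L by (intro mult_left_mono) auto
    moreover have "L * (1 / real M)^n1 < delta" using n1 L by (simp add: pos_less_divide_eq mult.commute)
    ultimately have "L * (1 / real M)^n \<le> delta" by linarith
    hence hd: "L / real M ^ n \<le> delta" by (simp add: power_divide)
    have "q^n \<le> q^n2" unfolding n_def using q0 q1 by (intro power_decreasing) auto
    hence "L powr s * q^n \<le> L powr s * q^n2" using Lp by (intro mult_left_mono) auto
    moreover have "L powr s * q^n2 < e" using n2 Lp by (simp add: pos_less_divide_eq mult.commute)
    ultimately have "L powr s * q^n < e" by linarith
    hence "ennreal (L powr s * q^n) \<le> ennreal e" by (intro ennreal_leI) simp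
    thus "hausdorff_content s delta E \<le> 0 + ennreal e" using bound[OF hd] by simp
  qed
  thus ?thesis by simp
qed

lemma hdim_bound:
  fixes E :: "real set" and M c :: nat
  assumes EL: "E \<subseteq> {a0..a0+L}" and L: "L > 0" and M: "M > 1" and c: "c \<ge> 1"
    and cnt: "\<And>n. card {j. j < M^n \<and> piece a0 (L / real M ^ n) j \<inter> E \<noteq> {}} \<le> c^n"
  shows "hausdorff_dim E \<le> ln c / ln M"
proof -
  let ?s0 = "ln c / ln M"
  have s00: "?s0 \<ge> 0" using M c by simp
  let ?A = "{s. s > 0 \<and> hausdorff_measure s E = 0}"
  have inA0: "hausdorff_measure s E = 0" if "s > ?s0" for s
  proof -
    have "hausdorff_content s delta E = 0" if "delta > 0" for delta
      using content_zero[OF EL L M c cnt \<open>s > ?s0\<close> that] .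
    hence "hausdorff_measure s E = (SUP delta\<in>{0::real<..}. (0::ennreal))" unfolding hausdorff_measure_def
      by (rule SUP_cong[OF refl]) simp
    moreover have "(1::real) \<in> {0<..}" by simp
    hence "(SUP delta\<in>{0::real<..}. (0::ennreal)) = 0" by (intro SUP_const) blast
    ultimately show "hausdorff_measure s E = 0" by simp
  qed
  have inA: "s \<in> ?A" if "s > ?s0" for s using inA0[OF that] that s00 by simp
  have le: "Inf ?A \<le> ?s0 + e" if "e > 0" for e
  proof (rule cInf_lower)
    show "?s0 + e \<in> ?A" using inA that by simp
    show "bdd_below ?A" by (rule bdd_belowI[of _ 0]) simp
  qed
  have "Inf ?A \<le> ?s0" by (rule field_le_epsilon) (rule le)
  thus ?thesis unfolding hausdorff_dim_def .
qed



theorem theorem1p1: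
  fixes k :: nat and eps :: real
  assumes "k \<ge> 3" and "0 < eps" and "eps < 1" and "1 / eps > real k"
  shows "d_AP k eps \<le>
    (1/2) * (ln (real (r_AP k (nat \<lfloor>1/eps + 1\<rfloor>)) + 1) / ln (real (nat \<lfloor>1/eps + 1\<rfloor>)) + 1)"
proof -
  define N where "N = nat \<lfloor>1/eps + 1\<rfloor>"
  define r where "r = r_AP k N"
  have k2: "k \<ge> 2" using assms by simp
  have rN: "real N = real_of_int \<lfloor>1/eps\<rfloor> + 1" unfolding N_def using assms
    by (simp add: add.commute)
  have "real N > 1/eps" using rN by linarith
  hence epsN: "eps * real N > 1" using assms by (simp add: field_simps)
  have "real N > real k" using rN assms by linarith
  hence Nk: "N > k" by simp
  hence N4: "N \<ge> 4" using assms by simp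
  let ?F = "{card A | A. A \<subseteq> {1..N} \<and> \<not> contains_kAP k A}"
  have finF: "finite ?F"
  proof (rule finite_subset)
    show "?F \<subseteq> card ` Pow {1..N}" by auto
  qed simp
  have rb: "card A \<le> r" if "A \<subseteq> {1..N}" "\<not> contains_kAP k A" for A
    unfolding r_def r_AP_def using that finF by (intro Max_ge) auto
  have one: "\<not> contains_kAP k {1}"
  proof
    assume "contains_kAP k {1}"
    then obtain x lam where lam: "lam > 0" and sub: "kAP k x lam \<subseteq> real ` {1}"
      unfolding contains_kAP_def by blast
    have "x + real 0 * lam \<in> kAP k x lam"
      unfolding kAP_def mem_Collect_eq using k2 by (intro exI[of _ 0]) simp
    moreover have "x + real 1 * lam \<in> kAP k x lam"
      unfolding kAP_def mem_Collect_eq using k2 by (intro exI[of _ 1]) simp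
    ultimately have "x = 1" "x + lam = 1" using sub by auto
    thus False using lam by simp
  qed
  have r1: "r \<ge> 1" using rb[of "{1}"] one N4 by simp
  define c where "c = N * r"
  have c1: "c \<ge> 1" unfolding c_def using r1 N4 by simp
  have M1: "N^2 > 1"
  proof -
    have "N \<le> N * N" by (rule le_square)
    thus ?thesis using N4 unfolding power2_eq_square by linarith
  qed
  define s0 where "s0 = ln (real c) / ln (real (N^2))"
  have lnN: "ln (real N) > 0" using N4 by simp
  have s0eq: "s0 = (1/2) * (ln (real r) / ln (real N) + 1)"
    unfolding s0_def c_def using N4 r1 lnN by (simp add: ln_mult ln_realpow field_simps)
  have s0le: "s0 \<le> (1/2) * (ln (real r + 1) / ln (real N) + 1)"
  proof -
    have "ln (real r) \<le> ln (real r + 1)" using r1 by simp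
    hence "ln (real r) / ln (real N) \<le> ln (real r + 1) / ln (real N)" using lnN by (intro divide_right_mono) auto
    thus ?thesis unfolding s0eq by (intro mult_left_mono add_right_mono) auto
  qed
  have each: "hausdorff_dim E \<le> s0" if "bounded E" "eps_avoids k eps E" for E
  proof -
    obtain B where B: "\<forall>x\<in>E. \<bar>x\<bar> \<le> B" using \<open>bounded E\<close> unfolding bounded_real by blast
    define a0 where "a0 = - (\<bar>B\<bar> + 1)"
    define L where "L = 2 * (\<bar>B\<bar> + 1)"
    have EL: "E \<subseteq> {a0..a0+L}" using B unfolding a0_def L_def by (force simp: abs_le_iff)
    have L: "L > 0" unfolding L_def by simp
    show ?thesis unfolding s0_def
      by (rule hdim_bound[OF EL L M1 c1]) (unfold c_def, rule level_count[OF k2 that(2) epsN L rb])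
  qed
  have ne: "{} \<in> {E. bounded E \<and> eps_avoids k eps E}"
  proof -
    have "eps_avoids k eps {}" unfolding eps_avoids_def
    proof (intro allI impI)
      fix x lam :: real
      have "x + real 0 * lam \<in> kAP k x lam"
        unfolding kAP_def mem_Collect_eq using k2 by (intro exI[of _ 0]) simp
      thus "\<exists>p\<in>kAP k x lam. \<forall>y\<in>{}. eps * lam \<le> \<bar>y - p\<bar>" by blast
    qed
    thus ?thesis by simp
  qed
  have "d_AP k eps \<le> s0"
    unfolding d_AP_def
  proof (rule cSup_least)
    show "{hausdorff_dim E |E. bounded E \<and> eps_avoids k eps E} \<noteq> {}" using ne by blast
  next
    fix x assume "x \<in> {hausdorff_dim E |E. bounded E \<and> eps_avoids k eps E}"
    thus "x \<le> s0" using each by blast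
  qed
  thus ?thesis using s0le unfolding N_def r_def by simp
qed

end
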